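(* Let $\{X_\gamma\}_{\gamma\in\Gamma}$ be a family of strictly convex real Banach spaces with $\dim(X_\gamma)\geq 2$ for every $\gamma\in\Gamma$, and let $Z_\infty=\bigoplus^{\ell_\infty}_{\gamma\in\Gamma}X_\gamma$. Then every element $z\in B_{Z_\infty}$ can be written as $z=\frac12(x+y)$ with $x,y$ extreme points of $B_{Z_\infty}$.
   Context: All Banach spaces are real. $Z_\infty=\bigoplus^{\ell_\infty}_{\gamma\in\Gamma}X_\gamma$ is the space of families $z=(z(\gamma))_{\gamma\in\Gamma}$ with $z(\gamma)\in X_\gamma$ and $\|z\|=\sup_\gamma\|z(\gamma)\|<\infty$; $B_{Z_\infty}$ is its closed unit ball. A Banach space is strictly convex if every point of its unit sphere is an extreme point of its closed unit ball. *)

theory Defs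
  imports "HOL-Analysis.Analysis"
begin

definition strictly_convex_subspace :: "'b::real_normed_vector set \<Rightarrow> bool" where
  "strictly_convex_subspace X \<longleftrightarrow>
     (\<forall>x\<in>X. norm x = 1 \<longrightarrow> x extreme_point_of (X \<inter> cball 0 1))"

definition linf_sum_ball :: "('g \<Rightarrow> 'b::real_normed_vector set) \<Rightarrow> ('g \<Rightarrow> 'b) set" where
  "linf_sum_ball X = {z. (\<forall>g. z g \<in> X g) \<and> (\<forall>g. norm (z g) \<le> 1)}"

definition fam_extreme_point_of :: "('g \<Rightarrow> 'b::real_vector) \<Rightarrow> ('g \<Rightarrow> 'b) set \<Rightarrow> bool" where
  "fam_extreme_point_of z S \<longleftrightarrow> z \<in> S \<and>
     (\<forall>x\<in>S. \<forall>y\<in>S. \<forall>t::real. 0 < t \<and> t < 1 \<and> x \<noteq> y \<longrightarrow>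
        z \<noteq> (\<lambda>g. (1 - t) *\<^sub>R x g + t *\<^sub>R y g))"

end

theory Submission
  imports Defs
begin

lemma exists_non_multiple:
  fixes z :: "'b::real_normed_vector"
  assumes "independent {u, v}" "u \<noteq> v"
  shows "\<exists>w\<in>{u,v}. w \<notin> span {z}"
proof (rule ccontr)
  assume "\<not> ?thesis"
  then have "{u,v} \<subseteq> span {z}" by auto
  then have "dim {u,v} \<le> card {z}" by (intro real_vector.dim_le_card) auto
  moreover have "dim {u,v} = 2"
    using assms real_vector.dim_span_eq_card_independent[of "{u,v}"] by (simp add: real_vector.dim_span)
  ultimately show False by simp
qed

lemma midpoint_units:
  fixes S :: "'b::real_normed_vector set"
  assumes S: "subspace S" and uS: "u \<in> S" and vS: "v \<in> S"
    and ind: "independent {u, v}" and uv: "u \<noteq> v"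
    and zS: "z \<in> S" and nz: "norm z \<le> 1"
  shows "\<exists>p\<in>S. \<exists>q\<in>S. norm p = 1 \<and> norm q = 1 \<and> z = (1/2) *\<^sub>R (p + q)"
proof (cases "z = 0")
  case True
  have "u \<noteq> 0" using ind by (metis dependent_zero insertI1)
  define p where "p = u /\<^sub>R norm u"
  have "p \<in> S" unfolding p_def using S uS by (simp add: subspace_scale)
  moreover have "- p \<in> S" using S \<open>p \<in> S\<close> by (simp add: subspace_neg)
  moreover have "norm p = 1" using \<open>u \<noteq> 0\<close> by (simp add: p_def)
  ultimately show ?thesis using True by (intro bexI[of _ p] bexI[of _ "-p"]) auto
next
  case False
  obtain w where wS: "w \<in> S" and wz: "w \<notin> span {z}"
    using exists_non_multiple[OF ind uv, of z] uS vS by auto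
  define e where "e = z /\<^sub>R norm z"
  have eS: "e \<in> S" unfolding e_def using S zS by (simp add: subspace_scale)
  have ne: "norm e = 1" using False by (simp add: e_def)
  define P where "P = (\<lambda>t::real. (1 - 2*t) *\<^sub>R e + (t*(1-t)) *\<^sub>R w)"
  have Pnz: "P t \<noteq> 0" if "0 \<le> t" "t \<le> 1" for t
  proof
    assume h: "P t = 0"
    show False
    proof (cases "t*(1-t) = 0")
      case True
      then have "t = 0 \<or> t = 1" by auto
      then show False using h ne by (auto simp: P_def)
    next
      case c: False
      have h2: "(t*(1-t)) *\<^sub>R w = (- (1 - 2*t)) *\<^sub>R e"
        proof -
        have "(t*(1-t)) *\<^sub>R w + (1 - 2*t) *\<^sub>R e = 0" using h unfolding P_def by (simp add: add.commute)
        then have "(t*(1-t)) *\<^sub>R w = - ((1 - 2*t) *\<^sub>R e)" by (rule add_eq_0_iff2[THEN iffD1])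
        then show ?thesis by (metis scaleR_minus_left)
      qed
      have "w = inverse (t*(1-t)) *\<^sub>R ((t*(1-t)) *\<^sub>R w)" using c by (simp del: inverse_mult_distrib)
      also have "\<dots> = (inverse (t*(1-t)) * (- (1 - 2*t))) *\<^sub>R e" using h2 by simp
      finally have "w = (inverse (t*(1-t)) * (- (1 - 2*t))) *\<^sub>R e" .
      then have "w \<in> span {z}" unfolding e_def
        by (simp add: span_base span_mul)
      then show False using wz by simp
    qed
  qed
  define G where "G = (\<lambda>t. P t /\<^sub>R norm (P t))"
  define h where "h = (\<lambda>t. norm (2 *\<^sub>R z - G t))"
  have contP: "continuous_on {0..1} P" unfolding P_def by (intro continuous_intros)
  have contG: "continuous_on {0..1} G" unfolding G_def
    using Pnz by (intro continuous_intros contP) auto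
  have conth: "continuous_on {0..1} h" unfolding h_def by (intro continuous_intros contG)
  have h0: "h 0 \<le> 1"
  proof -
    have "2 *\<^sub>R z - e = (2 * norm z - 1) *\<^sub>R e"
      using False by (simp add: e_def algebra_simps)
    then have "h 0 = \<bar>2 * norm z - 1\<bar>"
      using ne by (simp add: h_def G_def P_def)
    then show ?thesis using nz norm_ge_zero[of z] by (simp add: abs_le_iff)
  qed
  have h1: "1 \<le> h 1"
  proof -
    have "2 *\<^sub>R z + e = (2 * norm z + 1) *\<^sub>R e"
      using False by (simp add: e_def algebra_simps)
    then have "h 1 = \<bar>2 * norm z + 1\<bar>"
      using ne by (simp add: h_def G_def P_def)
    then show ?thesis by simp
  qed
  obtain t where t: "0 \<le> t" "t \<le> 1" "h t = 1"
    using IVT'[of h 0 1 1, OF h0 h1 _ conth] by auto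
  define p where "p = G t"
  define q where "q = 2 *\<^sub>R z - p"
  have pS: "p \<in> S" unfolding p_def G_def P_def using S eS wS
    by (intro subspace_scale subspace_add) auto
  have qS: "q \<in> S" unfolding q_def using S pS zS
    by (intro subspace_diff subspace_scale) auto
  have "norm p = 1" unfolding p_def G_def using Pnz[OF t(1,2)] by simp
  moreover have "norm q = 1" using t(3) by (simp add: q_def h_def p_def)
  moreover have "z = (1/2) *\<^sub>R (p + q)" by (simp add: q_def algebra_simps)
  ultimately show ?thesis using pS qS by blast
qed

theorem proposition2p5:
  fixes X :: "'g \<Rightarrow> 'b::banach set"
  assumes subsp: "\<And>g. subspace (X g)"
    and clsd: "\<And>g. closed (X g)"
    and sc: "\<And>g. strictly_convex_subspace (X g)"
    and dim2: "\<And>g. \<exists>u\<in>X g. \<exists>v\<in>X g. u \<noteq> v \<and> independent {u, v}"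
  shows "\<forall>z\<in>linf_sum_ball X. \<exists>x y. fam_extreme_point_of x (linf_sum_ball X) \<and>
            fam_extreme_point_of y (linf_sum_ball X) \<and> z = (\<lambda>g. (1/2) *\<^sub>R (x g + y g))"
proof
  have ext: "fam_extreme_point_of x (linf_sum_ball X)"
    if xX: "\<And>g. x g \<in> X g" and xn: "\<And>g. norm (x g) = 1" for x
    unfolding fam_extreme_point_of_def
  proof (intro conjI ballI allI impI)
    show "x \<in> linf_sum_ball X" using xX xn by (simp add: linf_sum_ball_def)
    fix a b and t :: real
    assume a: "a \<in> linf_sum_ball X" and b: "b \<in> linf_sum_ball X"
      and tt: "0 < t \<and> t < 1 \<and> a \<noteq> b"
    then obtain g where g: "a g \<noteq> b g" by auto
    have "x g extreme_point_of (X g \<inter> cball 0 1)"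
      using sc xX xn by (simp add: strictly_convex_subspace_def)
    moreover have "a g \<in> X g \<inter> cball 0 1" "b g \<in> X g \<inter> cball 0 1"
      using a b by (auto simp: linf_sum_ball_def)
    ultimately have "x g \<notin> open_segment (a g) (b g)"
      by (simp add: extreme_point_of_def)
    then have "x g \<noteq> (1 - t) *\<^sub>R a g + t *\<^sub>R b g"
      using g tt by (auto simp: in_segment)
    then show "x \<noteq> (\<lambda>g. (1 - t) *\<^sub>R a g + t *\<^sub>R b g)" by metis
  qed
  fix z assume z: "z \<in> linf_sum_ball X"
  have "\<forall>g. \<exists>pq. fst pq \<in> X g \<and> snd pq \<in> X g \<and> norm (fst pq) = 1 \<and> norm (snd pq) = 1
      \<and> z g = (1/2) *\<^sub>R (fst pq + snd pq)"
  proof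
    fix g
    obtain u v where "u \<in> X g" "v \<in> X g" "u \<noteq> v" "independent {u, v}" using dim2 by blast
    then obtain p q where "p \<in> X g" "q \<in> X g" "norm p = 1" "norm q = 1"
        "z g = (1/2) *\<^sub>R (p + q)"
      using midpoint_units[OF subsp, of u g v "z g"] z by (auto simp: linf_sum_ball_def)
    then show "\<exists>pq. fst pq \<in> X g \<and> snd pq \<in> X g \<and> norm (fst pq) = 1 \<and> norm (snd pq) = 1
      \<and> z g = (1/2) *\<^sub>R (fst pq + snd pq)" by (intro exI[of _ "(p,q)"]) auto
  qed
  then obtain F where F: "\<And>g. fst (F g) \<in> X g \<and> snd (F g) \<in> X g \<and> norm (fst (F g)) = 1
      \<and> norm (snd (F g)) = 1 \<and> z g = (1/2) *\<^sub>R (fst (F g) + snd (F g))"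
    by metis
  show "\<exists>x y. fam_extreme_point_of x (linf_sum_ball X) \<and>
            fam_extreme_point_of y (linf_sum_ball X) \<and> z = (\<lambda>g. (1/2) *\<^sub>R (x g + y g))"
    apply (rule exI[of _ "\<lambda>g. fst (F g)"], rule exI[of _ "\<lambda>g. snd (F g)"])
    using F by (auto intro!: ext)
qed

end
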